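(* Consider $m$ agents $i=1,\ldots,m$ with data and weight matrix $W$ as described in the context. Fix $\hat{\delta}>0$, an integer $T\ge1$, and a time $t\ge\max(t_1,t_2,t_3)$, where $t_1=8n+16\log\frac{2}{\hat\delta}$, $t_2=\left(\frac{16\hat{\mu}(\sqrt{4n}+\sqrt{2\log\frac{2}{\hat\delta}})}{\sigma_x}\right)^2$, $t_3=2(n+l)\log\frac{1}{\hat\delta}$. On the event $E_3$ defined in the context, for all $i\in\{1,\ldots,m\}$, $$\|\alpha^T_{i,t+1}-\bar\alpha_{t+1}\|\le m^{3/2}\sqrt{l}\,(\rho(W))^T\,(tc_1+\sqrt t\,c_2),$$ where $c_1=\|\Theta\|\big(\frac{19}{8}\sigma_x^2+\hat{\mu}^2\big)$ and $c_2=\sigma_\eta\Big(4\sigma_x\sqrt{(n+l)\log\frac{9}{\hat\delta}}+\hat{\mu}\big(\sqrt{2(l+n)}+\sqrt{2\log\frac{2}{\hat\delta}}\big)\Big)$.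
   Context: Data model: each agent $i\in\{1,\dots,m\}$ observes at times $j=1,2,\ldots$ pairs $(x_{i,j},y_{i,j})$ with $y_{i,j}=\Theta x_{i,j}+\eta_{i,j}$, $\Theta\in\mathbb{R}^{l\times n}$ unknown, $x_{i,j}\sim\mathcal{N}(\mu_{i,j},\sigma_x^2I_n)$, $\eta_{i,j}\sim\mathcal{N}(0,\sigma_\eta^2I_l)$, all mutually independent over time and agents, with deterministic means and $\sup_{i,j}\|\mu_{i,j}\|=\hat\mu<\infty$; $\sigma_x,\sigma_\eta>0$. The agents communicate over an undirected connected graph; $W\in\mathbb{R}^{m\times m}$ satisfies: $W(i,j)\ge0$, $W(i,j)=0$ if $j$ is not a neighbor of $i$ and $i\ne j$, $W\mathbf 1_m=\mathbf 1_m$, $W=W^*$, and $\rho(W)=\max\{\lambda_2(W),-\lambda_m(W)\}<1$, where $\lambda_1(W)\ge\lambda_2(W)\ge\cdots\ge\lambda_m(W)$ are the (real) eigenvalues of $W$. Define $\alpha_{i,t+1}=\sum_{j=1}^ty_{i,j}x_{i,j}^*$, $\bar\alpha_{t+1}=\frac1m\sum_{i=1}^m\alpha_{i,t+1}$, and the communicated quantities $\alpha^0_{i,t+1}=\alpha_{i,t+1}$, $\alpha^{k+1}_{i,t+1}=\sum_{j=1}^m W(i,j)\alpha^k_{j,t+1}$ for $k=0,\ldots,T-1$. Let $\bar{\mu}_{i,t}=\frac{4}{t\sigma_x^2}\sum_{j=1}^t\mu_{i,j}\mu_{i,j}^*$. The event $E_3$ is the intersection over all $i$ of $\{\|\sum_{j=1}^tx_{i,j}x_{i,j}^*\|\le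 t(\frac{19}{8}\sigma_x^2+\hat\mu^2)\}$, $\{\lambda_{\min}(\sum_{j=1}^tx_{i,j}x_{i,j}^* )\ge\frac{t\sigma_x^2}{8}\lambda_{\min}(I_n+\bar\mu_{i,t})\}$, and $\{\|\sum_{j=1}^t\eta_{i,j}x_{i,j}^*\|\le\sqrt t\,\sigma_\eta(4\sigma_x\sqrt{(n+l)\log\frac9{\hat\delta}}+\hat\mu(\sqrt{2(l+n)}+\sqrt{2\log\frac2{\hat\delta}}))\}$. $\|\cdot\|$ is the spectral norm, $A^*$ the transpose. *)

theory Defs
  imports "HOL-Analysis.Analysis" "HOL-Computational_Algebra.Polynomial"
begin

text \<open>Spectral norm (operator norm w.r.t. Euclidean norms) of a matrix.\<close>
definition specnorm :: "real^'n^'m \<Rightarrow> real" where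
  "specnorm A = onorm (\<lambda>v. A *v v)"

text \<open>Outer product u v^*.\<close>
definition outer :: "real^'m \<Rightarrow> real^'n \<Rightarrow> real^'n^'m" where
  "outer u v = (\<chi> a b. u$a * v$b)"

text \<open>Characteristic polynomial det(X I - A).\<close>
definition charpoly :: "real^'n^'n \<Rightarrow> real poly" where
  "charpoly A = det (\<chi> i j. (if i = j then [:0, 1:] else 0) - [:A$i$j:])"

text \<open>Real eigenvalues with algebraic multiplicity, sorted non-increasingly:
  eigs A ! 0 = lambda_1 >= eigs A ! 1 = lambda_2 >= ... (all eigenvalues are real
  for symmetric A).\<close>
definition eigs :: "real^'n^'n \<Rightarrow> real list" where
  "eigs A = rev (sorted_list_of_multiset (proots (charpoly A)))"

definition lambda_min :: "real^'n^'n \<Rightarrow> real" where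
  "lambda_min A = last (eigs A)"

text \<open>rho(W) = max(lambda_2(W), - lambda_m(W)).\<close>
definition rhoW :: "real^'n^'n \<Rightarrow> real" where
  "rhoW W = max (eigs W ! 1) (- last (eigs W))"

text \<open>Consensus iterates: alpha^0 = alpha, alpha^(k+1)_i = sum_j W(i,j) alpha^k_j.\<close>
fun cons_iter :: "real^'m^'m \<Rightarrow> ('m \<Rightarrow> real^'n^'l) \<Rightarrow> nat \<Rightarrow> 'm \<Rightarrow> real^'n^'l" where
  "cons_iter W a 0 i = a i"
| "cons_iter W a (Suc k) i = (\<Sum>j\<in>UNIV. W$i$j *\<^sub>R cons_iter W a k j)"

end

theory Submission
  imports Defs
begin


lemma sym_inner:
  fixes A :: "real^'n^'n"
  assumes "transpose A = A"
  shows "(A *v x) \<bullet> y = x \<bullet> (A *v y)"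
  by (metis assms dot_lmul_matrix vector_transpose_matrix)

lemma eig_from_max:
  fixes A :: "real^'n^'n"
  assumes sym: "transpose A = A" and S: "subspace S" and inv: "\<And>x. x \<in> S \<Longrightarrow> A *v x \<in> S"
    and u: "u \<in> S" "norm u = 1"
    and mx: "\<And>v. v \<in> S \<Longrightarrow> v \<bullet> (A *v v) \<le> M * (v \<bullet> v)"
    and Mu: "M = u \<bullet> (A *v u)"
  shows "A *v u = M *\<^sub>R u"
proof -
  define w where "w = M *\<^sub>R u - A *v u"
  have wS: "w \<in> S" unfolding w_def using S u inv by (simp add: subspace_diff subspace_scale)
  define Q where "Q v = M * (v \<bullet> v) - v \<bullet> (A *v v)" for v
  have Qn: "Q v \<ge> 0" if "v \<in> S" for v using mx[OF that] by (simp add: Q_def)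
  have uu: "u \<bullet> u = 1" using u by (simp add: dot_square_norm)
  have Qexp: "Q (u + t *\<^sub>R w) = 2 * t * (w \<bullet> w) + t^2 * Q w" for t
  proof -
    have s: "u \<bullet> (A *v w) = w \<bullet> (A *v u)" using sym_inner[OF sym, of w u] by (simp add: inner_commute)
    have "w \<bullet> w = w \<bullet> (M *\<^sub>R u - A *v u)" by (simp add: w_def)
    also have "\<dots> = M * (u \<bullet> w) - w \<bullet> (A *v u)" by (simp add: inner_diff_right inner_commute)
    finally have "w \<bullet> w = M * (u \<bullet> w) - w \<bullet> (A *v u)" .
    note ww = this
    have "Q (u + t *\<^sub>R w) = (M * (u \<bullet> u) - u \<bullet> (A *v u)) + 2 * t * (M * (u \<bullet> w) - w \<bullet> (A *v u)) + t^2 * Q w"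
      unfolding Q_def using s
      by (simp add: matrix_vector_right_distrib inner_add_left inner_add_right
          matrix_vector_mult_scaleR power2_eq_square algebra_simps inner_commute)
    thus ?thesis using uu Mu ww by simp

  qed
  define a where "a = w \<bullet> w"
  define q where "q = Q w"
  have a0: "a \<ge> 0" unfolding a_def by simp
  have q0: "q \<ge> 0" unfolding q_def using Qn wS by simp
  define t where "t = - a / (q + 1)"
  have "u + t *\<^sub>R w \<in> S" using S u wS by (simp add: subspace_add subspace_scale)
  hence "0 \<le> 2 * t * a + t^2 * q" using Qn Qexp unfolding a_def q_def by metis
  moreover have tq: "t * (q+1) = -a" unfolding t_def using q0 by (simp add: field_simps)
  moreover have "(q+1)^2 * (2 * t * a + t^2 * q) = 2*a*(t*(q+1))*(q+1) + (t*(q+1))^2*q"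
    by (simp add: power2_eq_square algebra_simps)
  ultimately have "0 \<le> 2*a*(-a)*(q+1) + (-a)^2*q" by (metis zero_le_power2 mult_nonneg_nonneg)
  hence "a^2 * (q+2) \<le> 0" by (simp add: power2_eq_square algebra_simps)
  hence "a^2 \<le> 0" using q0 by (simp add: mult_le_0_iff)
  hence "a = 0" by simp
  thus ?thesis unfolding a_def w_def by simp
qed

lemma sym_eigenbasis_sub:
  fixes A :: "real^'n^'n"
  assumes sym: "transpose A = A"
  shows "subspace S \<Longrightarrow> (\<forall>x\<in>S. A *v x \<in> S) \<Longrightarrow> \<exists>B. B \<subseteq> S \<and> finite B \<and> pairwise orthogonal B \<and>
     (\<forall>b\<in>B. norm b = 1 \<and> (\<exists>\<mu>. A *v b = \<mu> *\<^sub>R b)) \<and> span B = S"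
proof (induction "dim S" arbitrary: S rule: less_induct)
  case less
  note S = less.prems(1) and inv = less.prems(2)
  show ?case
  proof (cases "S \<subseteq> {0}")
    case True
    hence "S = {0}" using S subspace_0 by blast
    thus ?thesis by (intro exI[of _ "{}"]) auto
  next
    case False
    then obtain x where x: "x \<in> S" "x \<noteq> 0" by auto
    define K where "K = sphere (0::real^'n) 1 \<inter> S"
    have cK: "compact K" unfolding K_def using S closed_subspace by (intro compact_Int_closed) auto
    have xK: "(1 / norm x) *\<^sub>R x \<in> K" unfolding K_def using x S by (auto simp: subspace_scale)
    have cont: "continuous_on K (\<lambda>v. v \<bullet> (A *v v))"
      by (intro continuous_intros linear_continuous_on matrix_vector_mul_bounded_linear)
    obtain u where uK: "u \<in> K" and umax: "\<And>y. y \<in> K \<Longrightarrow> y \<bullet> (A *v y) \<le> u \<bullet> (A *v u)"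
      using continuous_attains_sup[OF cK _ cont] xK by blast
    define M where "M = u \<bullet> (A *v u)"
    have uS: "u \<in> S" and un: "norm u = 1" using uK unfolding K_def by auto
    have mx: "v \<bullet> (A *v v) \<le> M * (v \<bullet> v)" if vS: "v \<in> S" for v
    proof (cases "v = 0")
      case True thus ?thesis by simp
    next
      case False
      define v' where "v' = (1 / norm v) *\<^sub>R v"
      have "v' \<in> K" unfolding K_def v'_def using False vS S by (auto simp: subspace_scale)
      hence le: "v' \<bullet> (A *v v') \<le> M" using umax unfolding M_def by blast
      have "v' \<bullet> (A *v v') = (v \<bullet> (A *v v)) / (norm v)^2"
        unfolding v'_def by (simp add: matrix_vector_mult_scaleR power2_eq_square field_simps)
      hence "v \<bullet> (A *v v) \<le> M * (norm v)^2" using le False by (simp add: divide_le_eq)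
      thus ?thesis by (simp add: dot_square_norm)
    qed
    have eig: "A *v u = M *\<^sub>R u"
      by (rule eig_from_max[OF sym S _ uS un mx M_def]) (use inv in auto)
    define S' where "S' = S \<inter> {y. orthogonal u y}"
    have S'sub: "subspace S'" unfolding S'_def using S subspace_orthogonal_to_vector by (rule subspace_inter)
    have S'inv: "\<forall>x\<in>S'. A *v x \<in> S'"
    proof
      fix y assume y: "y \<in> S'"
      have "u \<bullet> (A *v y) = (A *v u) \<bullet> y" using sym_inner[OF sym, of u y] by simp
      also have "\<dots> = 0" using y eig unfolding S'_def by (simp add: orthogonal_def)
      finally show "A *v y \<in> S'" using y inv unfolding S'_def by (simp add: orthogonal_def)
    qed
    have uu: "u \<bullet> u = 1" using un by (simp add: dot_square_norm)
    have "u \<notin> S'" unfolding S'_def using uu by (auto simp: orthogonal_def)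
    hence "S' \<subset> S" unfolding S'_def using uS by blast
    moreover have "span S' = S'" "span S = S" using S'sub S by (simp_all add: span_eq_iff)
    ultimately have "dim S' < dim S" using dim_psubset[of S' S] by metis
    then obtain B' where B': "B' \<subseteq> S'" "finite B'" "pairwise orthogonal B'"
       "\<forall>b\<in>B'. norm b = 1 \<and> (\<exists>\<mu>. A *v b = \<mu> *\<^sub>R b)" "span B' = S'"
      using less.hyps[OF _ S'sub S'inv] by blast
    have uB': "u \<notin> B'" using B'(1) uu unfolding S'_def by (auto simp: orthogonal_def)
    show ?thesis
    proof (intro exI[of _ "insert u B'"] conjI)
      show "insert u B' \<subseteq> S" using B'(1) uS unfolding S'_def by auto
      show "finite (insert u B')" using B' by simp
      show "pairwise orthogonal (insert u B')"
        using B'(1,3) unfolding S'_def pairwise_insert by (auto simp: orthogonal_commute)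
      show "\<forall>b\<in>insert u B'. norm b = 1 \<and> (\<exists>\<mu>. A *v b = \<mu> *\<^sub>R b)" using B'(4) un eig by auto
      show "span (insert u B') = S"
      proof
        show "span (insert u B') \<subseteq> S" using B'(1) uS S unfolding S'_def by (intro span_minimal) auto
        show "S \<subseteq> span (insert u B')"
        proof
          fix v assume v: "v \<in> S"
          have "v - (u \<bullet> v) *\<^sub>R u \<in> S'" unfolding S'_def using v uS S uu
            by (auto simp: orthogonal_def subspace_diff subspace_scale inner_diff_right)
          thus "v \<in> span (insert u B')" unfolding span_insert B'(5) by auto
        qed
      qed
    qed
  qed
qed

lemma sym_onb:
  fixes A :: "real^'n^'n"
  assumes sym: "transpose A = A"
  shows "\<exists>B. finite B \<and> card B = CARD('n) \<and> pairwise orthogonal B \<and>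
     (\<forall>b\<in>B. norm b = 1 \<and> (\<exists>\<mu>. A *v b = \<mu> *\<^sub>R b)) \<and> span B = UNIV"
proof -
  obtain B where B: "finite B" "pairwise orthogonal B"
     "\<forall>b\<in>B. norm b = 1 \<and> (\<exists>\<mu>. A *v b = \<mu> *\<^sub>R b)" "span B = UNIV"
    using sym_eigenbasis_sub[OF sym, of UNIV] by auto
  have "0 \<notin> B" using B(3) by auto
  hence ind: "independent B" using B(2) pairwise_orthogonal_independent by blast
  have "card B = dim (UNIV :: (real^'n) set)" by (rule basis_card_eq_dim[OF subset_UNIV _ ind]) (simp add: B(4))
  also have "\<dots> = CARD('n)" by simp
  finally show ?thesis using B by blast
qed

definition cm :: "real^'n^'m \<Rightarrow> real poly^'n^'m" where
  "cm M = map_matrix (\<lambda>a. [:a:]) M"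

lemma const_add: "[:a + b:] = [:a:] + [:b::'a::comm_ring_1:]"
  by (simp add: add_pCons)

lemma const_sum: "[:sum f S:] = (\<Sum>x\<in>S. [:f x::'a::comm_ring_1:])"
proof (induction S rule: infinite_finite_induct)
  case (insert x F)
  then show ?case by (simp add: const_add)
qed auto

lemma const_prod: "[:prod f S:] = (\<Prod>x\<in>S. [:f x::'a::comm_ring_1:])"
proof (induction S rule: infinite_finite_induct)
  case (insert x F)
  then show ?case by (simp add: mult_to_poly[symmetric])
qed auto

lemma cm_mult: "cm (M ** N) = cm M ** cm N"
  by (simp add: cm_def vec_eq_iff matrix_matrix_mult_def const_sum mult_to_poly mult.commute)

lemma cm_one: "cm (mat 1 :: real^'n^'n) = mat 1"
  by (simp add: cm_def vec_eq_iff mat_def)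

lemma det_cm: "det (cm (M :: real^'n^'n)) = [:det M:]"
  unfolding det_def const_sum
  by (rule sum.cong) (auto simp: cm_def const_prod[symmetric] of_int_poly)

lemma mat_mult_comm: "mat (c::'a::comm_ring_1) ** M = M ** mat c"
proof -
  have "mat c ** M = (\<chi> i j. c * M$i$j)"
    unfolding matrix_matrix_mult_def mat_def
    by (auto simp: vec_eq_iff if_distrib if_distribR sum.delta'[OF finite] sum.delta[OF finite] cong: if_cong)
  moreover have "M ** mat c = (\<chi> i j. c * M$i$j)"
    unfolding matrix_matrix_mult_def mat_def
    by (auto simp: vec_eq_iff if_distrib if_distribR sum.delta'[OF finite] sum.delta[OF finite] mult.commute cong: if_cong)
  ultimately show ?thesis by simp
qed

lemma matrix_sub_ldistrib: "(A :: 'a::ring_1^'n^'m) ** (B - C) = A ** B - A ** C"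
  by (simp add: vec_eq_iff matrix_matrix_mult_def sum_subtractf ring_distribs)

lemma matrix_sub_rdistrib: "((B - C) :: 'a::ring_1^'n^'m) ** A = B ** A - C ** A"
  by (simp add: vec_eq_iff matrix_matrix_mult_def sum_subtractf ring_distribs)

lemma charpoly_cm: "charpoly A = det (mat [:0,1:] - cm A)"
  unfolding charpoly_def cm_def by (rule arg_cong[of _ _ det]) (simp add: vec_eq_iff mat_def)

lemma charpoly_similar:
  fixes A D P :: "real^'n^'n"
  assumes PP: "transpose P ** P = mat 1" and D: "transpose P ** A ** P = D"
  shows "charpoly A = charpoly D"
proof -
  define Q where "Q = cm (transpose P)"
  define R where "R = cm P"
  have QR: "Q ** R = mat 1" unfolding Q_def R_def by (simp add: cm_mult[symmetric] PP cm_one)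
  have "Q ** (mat [:0,1:] - cm A) ** R = (Q ** mat [:0,1:]) ** R - Q ** cm A ** R"
    by (simp add: matrix_sub_ldistrib matrix_sub_rdistrib)
  also have "(Q ** mat [:0,1:]) ** R = mat [:0,1:] ** (Q ** R)"
    by (metis mat_mult_comm matrix_mul_assoc)
  also have "Q ** cm A ** R = cm D" unfolding Q_def R_def D[symmetric] by (simp add: cm_mult)
  finally have e: "Q ** (mat [:0,1:] - cm A) ** R = mat [:0,1:] - cm D" using QR by simp
  have "det Q * det R = 1" unfolding Q_def R_def det_cm mult_to_poly det_mul[symmetric] PP by simp
  hence "charpoly D = det Q * det R * charpoly A" unfolding charpoly_cm e[symmetric] det_mul
    by (simp add: algebra_simps)
  thus ?thesis using \<open>det Q * det R = 1\<close> by simp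
qed

lemma sum_single_mset_image: "finite A \<Longrightarrow> (\<Sum>i\<in>A. {# d i #}) = image_mset d (mset_set A)"
  by (induction A rule: finite_induct) auto

lemma charpoly_diag:
  fixes d :: "'n::finite \<Rightarrow> real"
  shows "proots (charpoly (\<chi> i j. if i = j then d i else 0 :: real^'n^'n)) = image_mset d (mset_set UNIV)"
proof -
  have "charpoly (\<chi> i j. if i = j then d i else 0 :: real^'n^'n) = (\<Prod>i\<in>UNIV. [:- d i, 1:])"
    unfolding charpoly_def by (subst det_diagonal) auto
  also have "proots \<dots> = (\<Sum>i\<in>UNIV. {# d i #})" by (subst proots_prod) auto
  also have "\<dots> = image_mset d (mset_set UNIV)"
    by (rule sum_single_mset_image) simp
  finally show ?thesis .
qed


lemma sym_spectral:
  fixes A :: "real^'n^'n"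
  assumes sym: "transpose A = A"
  shows "\<exists>(g::'n \<Rightarrow> real^'n) ev. (\<forall>k. norm (g k) = 1 \<and> A *v g k = ev k *\<^sub>R g k) \<and> (\<forall>k l. k \<noteq> l \<longrightarrow> g k \<bullet> g l = 0)
     \<and> (\<forall>v. v = (\<Sum>k\<in>UNIV. (v \<bullet> g k) *\<^sub>R g k)) \<and> proots (charpoly A) = image_mset ev (mset_set UNIV)"
proof -
  obtain B where B: "finite B" "card B = CARD('n)" "pairwise orthogonal B"
     "\<forall>b\<in>B. norm b = 1 \<and> (\<exists>\<mu>. A *v b = \<mu> *\<^sub>R b)" "span B = UNIV"
    using sym_onb[OF sym] by blast
  obtain g where g: "bij_betw g (UNIV :: 'n set) B"
    using finite_same_card_bij[of "UNIV :: 'n set" B] B(1,2) by auto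
  have gB: "g k \<in> B" for k using g by (auto simp: bij_betw_def)
  have ginj: "g k \<noteq> g l" if "k \<noteq> l" for k l using g that by (auto simp: bij_betw_def inj_on_def)
  define ev where "ev k = (SOME \<mu>. A *v g k = \<mu> *\<^sub>R g k)" for k
  have gev: "norm (g k) = 1 \<and> A *v g k = ev k *\<^sub>R g k" for k
  proof -
    have e: "\<exists>\<mu>. A *v g k = \<mu> *\<^sub>R g k" and n: "norm (g k) = 1" using B(4) gB[of k] by auto
    have "A *v g k = ev k *\<^sub>R g k" unfolding ev_def by (rule someI_ex[OF e])
    thus ?thesis using n by simp
  qed
  have gorth: "g k \<bullet> g l = 0" if "k \<noteq> l" for k l
  proof -
    have "orthogonal (g k) (g l)" by (rule pairwiseD[OF B(3) gB[of k] gB[of l] ginj[OF that]])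
    thus ?thesis by (simp add: orthogonal_def)
  qed
  have gg: "g k \<bullet> g l = (if k = l then 1 else 0)" for k l
  proof (cases "k = l")
    case True
    have "g k \<bullet> g k = 1" using gev[of k] by (simp add: dot_square_norm)
    thus ?thesis using True by simp
  qed (simp add: gorth)
  define P :: "real^'n^'n" where "P = (\<chi> i k. g k $ i)"
  define D :: "real^'n^'n" where "D = (\<chi> i j. if i = j then ev i else 0)"
  have PP: "transpose P ** P = mat 1"
  proof -
    have "(transpose P ** P) $ k $ l = g k \<bullet> g l" for k l
      by (simp add: P_def transpose_def matrix_matrix_mult_def inner_vec_def)
    hence "(transpose P ** P) $ k $ l = (mat 1 :: real^'n^'n) $ k $ l" for k l
      unfolding gg by (simp add: mat_def)
    thus ?thesis by (simp add: vec_eq_iff)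
  qed
  have AP: "A ** P = P ** D"
  proof -
    have "(A ** P) $ i $ k = (A *v g k) $ i" for i k
      unfolding matrix_matrix_mult_def matrix_vector_mult_def P_def by simp
    moreover have "(P ** D) $ i $ k = ev k * g k $ i" for i k
    proof -
      have "(P ** D) $ i $ k = (\<Sum>j\<in>UNIV. g j $ i * (if j = k then ev j else 0))"
        unfolding P_def D_def matrix_matrix_mult_def by (simp only: vec_lambda_beta)
      moreover have "(\<lambda>j. g j $ i * (if j = k then ev j else 0)) = (\<lambda>j. if j = k then ev k * g k $ i else 0)"
        by auto
      ultimately show ?thesis by (simp only:) simp
    qed
    ultimately have "(A ** P) $ i $ k = (P ** D) $ i $ k" for i k using gev[of k] by simp
    thus ?thesis by (simp add: vec_eq_iff)
  qed
  have "transpose P ** A ** P = D"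
  proof -
    have "transpose P ** A ** P = transpose P ** (A ** P)" by (simp add: matrix_mul_assoc)
    also have "\<dots> = (transpose P ** P) ** D" by (simp add: AP matrix_mul_assoc)
    finally show ?thesis by (simp add: PP)
  qed
  hence "charpoly A = charpoly D" by (rule charpoly_similar[OF PP])
  hence cp: "proots (charpoly A) = image_mset ev (mset_set UNIV)"
    unfolding D_def using charpoly_diag[of ev] by (simp only:)
  have exp: "v = (\<Sum>k\<in>UNIV. (v \<bullet> g k) *\<^sub>R g k)" for v
  proof -
    define w where "w = v - (\<Sum>k\<in>UNIV. (v \<bullet> g k) *\<^sub>R g k)"
    have "w \<bullet> g l = 0" for l
    proof -
      have "(\<Sum>k\<in>UNIV. (v \<bullet> g k) *\<^sub>R g k) \<bullet> g l = (\<Sum>k\<in>UNIV. (v \<bullet> g k) * (g k \<bullet> g l))"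
        by (simp add: inner_sum_left)
      also have "\<dots> = v \<bullet> g l" by (simp add: gg if_distrib cong: if_cong)
      finally show ?thesis by (simp add: w_def inner_diff_left)
    qed
    hence "orthogonal w b" if "b \<in> B" for b
      using that g unfolding bij_betw_def orthogonal_def by auto
    hence "orthogonal w w" using orthogonal_to_span[of w B w] B(5) by auto
    thus ?thesis unfolding w_def orthogonal_def by simp
  qed
  have e1: "\<forall>k. norm (g k) = 1 \<and> A *v g k = ev k *\<^sub>R g k" using gev by blast
  have e2: "\<forall>k l. k \<noteq> l \<longrightarrow> g k \<bullet> g l = 0" using gorth by blast
  have e3: "\<forall>v. v = (\<Sum>k\<in>UNIV. (v \<bullet> g k) *\<^sub>R g k)" using exp by (rule allI)
  show ?thesis by (rule exI, rule exI, rule conjI[OF e1 conjI[OF e2 conjI[OF e3 cp]]])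
qed


lemma sorted_ge_last: "sorted_wrt (\<ge>) L \<Longrightarrow> x \<in> set L \<Longrightarrow> last L \<le> (x::real)"
proof (induction L)
  case (Cons a L)
  show ?case
  proof (cases "L = []")
    case True thus ?thesis using Cons by simp
  next
    case False
    have "last L \<in> set L" using False by simp
    hence "last L \<le> a" using Cons.prems(1) by auto
    thus ?thesis using Cons False by auto
  qed
qed simp

lemma sorted_second:
  fixes L :: "real list"
  assumes "sorted_wrt (\<ge>) L" and "{#a, b#} \<subseteq># mset L"
  shows "min a b \<le> L ! 1"
proof (cases L)
  case Nil thus ?thesis using assms by simp
next
  case (Cons x L')
  show ?thesis
  proof (cases L')
    case Nil
    hence "size {#a, b#} \<le> size (mset L)" using assms(2) by (intro size_mset_mono) 
    thus ?thesis using Cons \<open>L' = []\<close> by simp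
  next
    case (Cons y rest)
    note L = \<open>L = x # L'\<close> Cons
    have ymax: "z \<le> y" if "z \<in> set L'" for z using assms(1) that L by auto
    show ?thesis
    proof (cases "a = x")
      case True
      have "add_mset x {#b#} \<subseteq># add_mset x (mset L')" using assms(2) True L by simp
      hence "b \<in># mset L'" by (simp add: mset_subset_eq_add_mset_cancel)
      hence "b \<le> y" using ymax by simp
      thus ?thesis using L by simp
    next
      case False
      have "a \<in># mset L" using assms(2) by (meson mset_subset_eqD union_single_eq_member)
      hence "a \<in> set L'" using False L by simp
      hence "a \<le> y" using ymax by simp
      thus ?thesis using L by simp
    qed
  qed
qed

lemma W_contract:
  fixes W :: "real^'m^'m"
  assumes m2: "CARD('m) \<ge> 2" and sym: "transpose W = W"
    and stoch: "\<And>i. (\<Sum>j\<in>UNIV. W$i$j) = 1" and rho: "rhoW W < 1"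
  shows "0 \<le> rhoW W \<and> (\<forall>v. v \<bullet> (\<chi> i. 1) = 0 \<longrightarrow> norm (W *v v) \<le> rhoW W * norm v)"
proof -
  obtain g :: "'m \<Rightarrow> real^'m" and ev where
    gev: "\<And>k. norm (g k) = 1 \<and> W *v g k = ev k *\<^sub>R g k"
    and exp: "\<And>v. v = (\<Sum>k\<in>UNIV. (v \<bullet> g k) *\<^sub>R g k)"
    and cp: "proots (charpoly W) = image_mset ev (mset_set UNIV)"
    using sym_spectral[OF sym] by blast
  define Ms where "Ms = image_mset ev (mset_set (UNIV :: 'm set))"
  define L where "L = eigs W"
  have L_def': "L = rev (sorted_list_of_multiset Ms)" unfolding L_def eigs_def cp Ms_def ..
  have mL: "mset L = Ms" unfolding L_def' by simp
  have sL: "sorted_wrt (\<ge>) L" unfolding L_def' sorted_wrt_rev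
    using sorted_sorted_list_of_multiset[of Ms] by (simp add: sorted_wrt_iff_nth_less)
  have setL: "set L = range ev" unfolding L_def' Ms_def by simp
  have rhodef: "rhoW W = max (L ! 1) (- last L)" unfolding rhoW_def L_def ..
  define one :: "real^'m" where "one = (\<chi> i. 1)"
  have Wone: "W *v one = one"
    unfolding one_def by (simp add: vec_eq_iff matrix_vector_mult_def stoch)
  define c where "c k = one \<bullet> g k" for k
  have symi: "(W *v x) \<bullet> y = x \<bullet> (W *v y)" for x y by (rule sym_inner[OF sym])
  have cev: "c k = ev k * c k" for k
  proof -
    have "c k = (W *v one) \<bullet> g k" unfolding c_def Wone ..
    also have "\<dots> = one \<bullet> (W *v g k)" by (rule symi)
    finally show ?thesis using gev[of k] unfolding c_def by simp
  qed
  have "\<exists>k0. c k0 \<noteq> 0"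
  proof (rule ccontr)
    assume "\<not> ?thesis"
    hence "(\<Sum>k\<in>UNIV. c k *\<^sub>R g k) = 0" by simp
    moreover have "(\<Sum>k\<in>UNIV. c k *\<^sub>R g k) = one" unfolding c_def by (rule exp[of one, symmetric])
    ultimately have "one = 0" by simp
    moreover have "one $ i = 1" for i unfolding one_def by simp
    ultimately show False by simp
  qed
  then obtain k0 where k0: "c k0 \<noteq> 0" by blast
  have ev0: "ev k0 = 1" using cev[of k0] k0 by simp
  have evk: "ev k \<le> L ! 1 \<and> ev k < 1" if "k \<noteq> k0" for k
  proof -
    have "mset_set {k0, k} \<subseteq># mset_set (UNIV :: 'm set)" by simp
    hence "image_mset ev (mset_set {k0, k}) \<subseteq># Ms" unfolding Ms_def by (rule image_mset_subseteq_mono)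
    hence "{#ev k0, ev k#} \<subseteq># mset L" using that mL by simp
    hence "min (ev k0) (ev k) \<le> L ! 1" by (rule sorted_second[OF sL])
    moreover have "L ! 1 < 1" using rho rhodef by simp
    ultimately show ?thesis using ev0 by (auto simp: min_def split: if_splits)
  qed
  have evl: "last L \<le> ev k" for k using sorted_ge_last[OF sL] setL by auto
  have absev: "\<bar>ev k\<bar> \<le> rhoW W" if "k \<noteq> k0" for k
    using evk[OF that] evl[of k] rhodef by auto
  have c0: "c k = 0" if "k \<noteq> k0" for k using cev[of k] evk[OF that] by auto
  obtain k1 :: 'm where "k1 \<noteq> k0"
  proof -
    have "\<not> (UNIV :: 'm set) \<subseteq> {k0}"
    proof
      assume "(UNIV :: 'm set) \<subseteq> {k0}"
      hence "card (UNIV :: 'm set) \<le> card {k0}" by (intro card_mono) auto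
      thus False using m2 by simp
    qed
    thus ?thesis using that by blast
  qed
  hence rho0: "0 \<le> rhoW W" using absev[of k1] by simp
  have parseval: "x \<bullet> x = (\<Sum>k\<in>UNIV. (x \<bullet> g k)^2)" for x
  proof -
    have e: "(\<Sum>k\<in>UNIV. (x \<bullet> g k) *\<^sub>R g k) = x" by (rule exp[of x, symmetric])
    have "x \<bullet> x = x \<bullet> (\<Sum>k\<in>UNIV. (x \<bullet> g k) *\<^sub>R g k)" by (simp only: e)
    thus ?thesis by (simp add: inner_sum_right power2_eq_square)
  qed
  have main: "norm (W *v v) \<le> rhoW W * norm v" if v: "v \<bullet> one = 0" for v
  proof -
    have e: "(\<Sum>k\<in>UNIV. c k *\<^sub>R g k) = one" unfolding c_def by (rule exp[of one, symmetric])
    have "v \<bullet> one = v \<bullet> (\<Sum>k\<in>UNIV. c k *\<^sub>R g k)" by (simp only: e)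
    also have "\<dots> = (\<Sum>k\<in>UNIV. c k * (v \<bullet> g k))" by (simp add: inner_sum_right)
    also have "\<dots> = (\<Sum>k\<in>UNIV. if k = k0 then c k0 * (v \<bullet> g k0) else 0)"
      by (rule sum.cong) (auto simp: c0)
    also have "\<dots> = c k0 * (v \<bullet> g k0)" by simp
    finally have vg0: "v \<bullet> g k0 = 0" using v k0 by simp
    have coef: "(W *v v) \<bullet> g k = ev k * (v \<bullet> g k)" for k
      using symi[of v "g k"] gev[of k] by simp
    have "(norm (W *v v))^2 = (W *v v) \<bullet> (W *v v)" by (simp only: power2_norm_eq_inner)
    also have "\<dots> = (\<Sum>k\<in>UNIV. ((W *v v) \<bullet> g k)^2)" by (rule parseval)
    also have "\<dots> = (\<Sum>k\<in>UNIV. (ev k * (v \<bullet> g k))^2)" by (simp only: coef)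
    also have "\<dots> \<le> (\<Sum>k\<in>UNIV. (rhoW W)^2 * (v \<bullet> g k)^2)"
    proof (rule sum_mono)
      fix k :: 'm
      show "(ev k * (v \<bullet> g k))^2 \<le> (rhoW W)^2 * (v \<bullet> g k)^2"
      proof (cases "k = k0")
        case True thus ?thesis using vg0 by simp
      next
        case False
        have "(ev k)^2 \<le> (rhoW W)^2" using power_mono[OF absev[OF False] abs_ge_zero, of 2] by simp
        hence "(ev k)^2 * (v \<bullet> g k)^2 \<le> (rhoW W)^2 * (v \<bullet> g k)^2" by (rule mult_right_mono) simp
        thus ?thesis by (simp only: power_mult_distrib)
      qed
    qed
    also have "\<dots> = (rhoW W)^2 * (v \<bullet> v)" by (simp only: parseval sum_distrib_left)
    also have "\<dots> = (rhoW W * norm v)^2" by (simp only: power_mult_distrib power2_norm_eq_inner)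
    finally have "(norm (W *v v))^2 \<le> (rhoW W * norm v)^2" .
    thus ?thesis by (rule power2_le_imp_le) (use rho0 in simp)
  qed
  show ?thesis using rho0 main unfolding one_def by blast
qed


primrec wpow :: "real^'m^'m \<Rightarrow> nat \<Rightarrow> real^'m^'m" where
  "wpow W 0 = mat 1"
| "wpow W (Suc k) = W ** wpow W k"

lemma wpow_comm: "W ** wpow W k = wpow W k ** W"
  by (induction k) (simp_all add: matrix_mul_assoc)

lemma wpow_sym: "transpose W = W \<Longrightarrow> transpose (wpow W k) = wpow W k"
proof (induction k)
  case 0 thus ?case by (simp add: transpose_mat)
next
  case (Suc k)
  thus ?case by (simp add: matrix_transpose_mul wpow_comm)
qed

lemma wpow_one: "(\<And>i. (\<Sum>j\<in>UNIV. W$i$j) = 1) \<Longrightarrow> wpow W k *v (\<chi> i. 1) = (\<chi> i. 1)"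
proof (induction k)
  case 0 thus ?case by simp
next
  case (Suc k)
  have "W *v (\<chi> i. 1) = (\<chi> i. 1)" using Suc.prems by (simp add: vec_eq_iff matrix_vector_mult_def)
  thus ?case using Suc by (simp add: matrix_vector_mul_assoc[symmetric])
qed

lemma cons_iter_wpow:
  fixes W :: "real^'m^'m"
  shows "cons_iter W a k i = (\<Sum>j\<in>UNIV. (wpow W k)$i$j *\<^sub>R a j)"
proof (induction k arbitrary: i)
  case 0
  have "(\<Sum>j\<in>UNIV. (mat 1 :: real^'m^'m)$i$j *\<^sub>R a j) = (\<Sum>j\<in>UNIV. if j = i then a i else 0)"
    by (rule sum.cong) (auto simp: mat_def)
  thus ?case by simp
next
  case (Suc k)
  have "cons_iter W a (Suc k) i = (\<Sum>j\<in>UNIV. W$i$j *\<^sub>R (\<Sum>l\<in>UNIV. (wpow W k)$j$l *\<^sub>R a l))"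
    using Suc by simp
  also have "\<dots> = (\<Sum>j\<in>UNIV. \<Sum>l\<in>UNIV. (W$i$j * (wpow W k)$j$l) *\<^sub>R a l)"
    by (simp add: scaleR_sum_right)
  also have "\<dots> = (\<Sum>l\<in>UNIV. \<Sum>j\<in>UNIV. (W$i$j * (wpow W k)$j$l) *\<^sub>R a l)"
    by (rule sum.swap)
  also have "\<dots> = (\<Sum>l\<in>UNIV. (wpow W (Suc k))$i$l *\<^sub>R a l)"
    by (simp add: matrix_matrix_mult_def scaleR_sum_left)
  finally show ?case .
qed

lemma specnorm_bound: "norm (A *v v) \<le> specnorm (A::real^'n^'m) * norm v"
  unfolding specnorm_def by (rule onorm[OF matrix_vector_mul_bounded_linear])

lemma specnorm_le: "(\<And>v. norm (A *v v) \<le> b * norm v) \<Longrightarrow> specnorm (A::real^'n^'m) \<le> b"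
  unfolding specnorm_def by (rule onorm_le)

lemma specnorm_nonneg: "0 \<le> specnorm (A::real^'n^'m)"
  unfolding specnorm_def by (rule onorm_pos_le[OF matrix_vector_mul_bounded_linear])

lemma specnorm_add: "specnorm ((A::real^'n^'m) + B) \<le> specnorm A + specnorm B"
proof (rule specnorm_le)
  fix v
  have "norm ((A + B) *v v) \<le> norm (A *v v) + norm (B *v v)"
    by (simp add: matrix_vector_mult_add_rdistrib norm_triangle_ineq)
  also have "\<dots> \<le> specnorm A * norm v + specnorm B * norm v"
    by (intro add_mono specnorm_bound)
  finally show "norm ((A + B) *v v) \<le> (specnorm A + specnorm B) * norm v" by (simp add: algebra_simps)
qed

lemma specnorm_mult: "specnorm ((A::real^'n^'m) ** B) \<le> specnorm A * specnorm (B::real^'p^'n)"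
proof (rule specnorm_le)
  fix v
  have "norm ((A ** B) *v v) = norm (A *v (B *v v))" by (simp add: matrix_vector_mul_assoc)
  also have "\<dots> \<le> specnorm A * norm (B *v v)" by (rule specnorm_bound)
  also have "\<dots> \<le> specnorm A * (specnorm B * norm v)"
    by (intro mult_left_mono specnorm_bound specnorm_nonneg)
  finally show "norm ((A ** B) *v v) \<le> specnorm A * specnorm B * norm v" by (simp add: algebra_simps)
qed

lemma scaleR_mv: "(c *\<^sub>R (M::real^'n^'m)) *v v = c *\<^sub>R (M *v v)"
  by (simp add: vec_eq_iff matrix_vector_mult_def sum_distrib_left algebra_simps)

lemma sum_mv: "(\<Sum>j\<in>S. (M j::real^'n^'m)) *v v = (\<Sum>j\<in>S. M j *v v)"
proof (induction S rule: infinite_finite_induct)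
  case (insert x F)
  thus ?case by (simp add: matrix_vector_mult_add_rdistrib)
qed (simp_all add: vec_eq_iff matrix_vector_mult_def)

lemma specnorm_lincomb:
  assumes "\<And>j. j \<in> S \<Longrightarrow> specnorm (M j) \<le> K" "finite S"
  shows "specnorm (\<Sum>j\<in>S. c j *\<^sub>R (M j::real^'n^'m)) \<le> (\<Sum>j\<in>S. \<bar>c j\<bar>) * K"
proof (rule specnorm_le)
  fix v
  have "norm ((\<Sum>j\<in>S. c j *\<^sub>R M j) *v v) = norm (\<Sum>j\<in>S. c j *\<^sub>R (M j *v v))"
    by (simp add: sum_mv scaleR_mv)
  also have "\<dots> \<le> (\<Sum>j\<in>S. norm (c j *\<^sub>R (M j *v v)))" by (rule norm_sum)
  also have "\<dots> \<le> (\<Sum>j\<in>S. \<bar>c j\<bar> * (K * norm v))"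
  proof (rule sum_mono)
    fix j assume j: "j \<in> S"
    have "norm (M j *v v) \<le> specnorm (M j) * norm v" by (rule specnorm_bound)
    also have "\<dots> \<le> K * norm v" using assms(1)[OF j] by (simp add: mult_right_mono)
    finally show "norm (c j *\<^sub>R (M j *v v)) \<le> \<bar>c j\<bar> * (K * norm v)"
      by (simp add: mult_left_mono)
  qed
  also have "\<dots> = (\<Sum>j\<in>S. \<bar>c j\<bar>) * K * norm v" by (simp add: sum_distrib_right mult.assoc)
  finally show "norm ((\<Sum>j\<in>S. c j *\<^sub>R M j) *v v) \<le> (\<Sum>j\<in>S. \<bar>c j\<bar>) * K * norm v" .
qed

lemma outer_add: "outer (u + w) y = outer u y + outer w y"
  by (simp add: vec_eq_iff outer_def algebra_simps)

lemma outer_mv: "outer (Theta *v x) y = Theta ** outer x y"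
  by (simp add: vec_eq_iff outer_def matrix_vector_mult_def matrix_matrix_mult_def sum_distrib_right mult.assoc)

lemma mat_mul_sum: "(Theta::real^'n^'l) ** (\<Sum>j\<in>S. M j) = (\<Sum>j\<in>S. Theta ** (M j::real^'p^'n))"
proof (induction S rule: infinite_finite_induct)
  case (insert x F)
  thus ?case by (simp add: matrix_add_ldistrib)
qed (simp_all add: vec_eq_iff matrix_matrix_mult_def)

theorem proposition2:
  fixes Theta :: "real^'n^'l"
    and W :: "real^'m^'m"
    and E :: "'m \<Rightarrow> 'm \<Rightarrow> bool"
    and x mu :: "'m \<Rightarrow> nat \<Rightarrow> real^'n"
    and eta :: "'m \<Rightarrow> nat \<Rightarrow> real^'l"
    and sigma_x sigma_eta mu_hat delta :: real
    and T t :: nat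
  assumes m2: "CARD('m) \<ge> 2"
    and sx: "sigma_x > 0" and seta: "sigma_eta > 0"
    and mu_bdd: "bdd_above {norm (mu i j) | i j. j \<ge> 1}"
    and mu_hat: "mu_hat = Sup {norm (mu i j) | i j. j \<ge> 1}"
    and E_sym: "\<And>i j. E i j \<longleftrightarrow> E j i"
    and E_irrefl: "\<And>i. \<not> E i i"
    and E_conn: "\<And>i j. (\<lambda>a b. E a b)\<^sup>*\<^sup>* i j"
    and W_nonneg: "\<And>i j. W$i$j \<ge> 0"
    and W_graph: "\<And>i j. i \<noteq> j \<Longrightarrow> \<not> E i j \<Longrightarrow> W$i$j = 0"
    and W_stoch: "\<And>i. (\<Sum>j\<in>UNIV. W$i$j) = 1"
    and W_sym: "transpose W = W"
    and W_rho: "rhoW W < 1"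
    and delta: "delta > 0"
    and T: "T \<ge> 1"
    and t1: "real t \<ge> 8 * CARD('n) + 16 * ln (2 / delta)"
    and t2: "real t \<ge> (16 * mu_hat * (sqrt (4 * CARD('n)) + sqrt (2 * ln (2 / delta))) / sigma_x)\<^sup>2"
    and t3: "real t \<ge> 2 * (CARD('n) + CARD('l)) * ln (1 / delta)"
    \<comment> \<open>the event E_3\<close>
    and E3_1: "\<And>i. specnorm (\<Sum>j=1..t. outer (x i j) (x i j))
                 \<le> t * (19/8 * sigma_x\<^sup>2 + mu_hat\<^sup>2)"
    and E3_2: "\<And>i. lambda_min (\<Sum>j=1..t. outer (x i j) (x i j))
                 \<ge> t * sigma_x\<^sup>2 / 8 *
                   lambda_min (mat 1 + (4 / (t * sigma_x\<^sup>2)) *\<^sub>R (\<Sum>j=1..t. outer (mu i j) (mu i j)))"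
    and E3_3: "\<And>i. specnorm (\<Sum>j=1..t. outer (eta i j) (x i j))
                 \<le> sqrt t * sigma_eta * (4 * sigma_x * sqrt ((CARD('n) + CARD('l)) * ln (9 / delta))
                     + mu_hat * (sqrt (2 * (CARD('l) + CARD('n))) + sqrt (2 * ln (2 / delta))))"
  shows "\<forall>i. specnorm
            (cons_iter W (\<lambda>i. \<Sum>j=1..t. outer (Theta *v x i j + eta i j) (x i j)) T i
             - (1 / CARD('m)) *\<^sub>R (\<Sum>k\<in>UNIV. \<Sum>j=1..t. outer (Theta *v x k j + eta k j) (x k j)))
         \<le> CARD('m) powr (3/2) * sqrt (CARD('l)) * (rhoW W) ^ T *
            (t * (specnorm Theta * (19/8 * sigma_x\<^sup>2 + mu_hat\<^sup>2))
             + sqrt t * (sigma_eta * (4 * sigma_x * sqrt ((CARD('n) + CARD('l)) * ln (9 / delta))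
                     + mu_hat * (sqrt (2 * (CARD('l) + CARD('n))) + sqrt (2 * ln (2 / delta)))))) "
proof -
  define m where "m = CARD('m)"
  define a where "a = (\<lambda>k. \<Sum>j=1..t. outer (Theta *v x k j + eta k j) (x k j))"
  define C1 where "C1 = 19/8 * sigma_x\<^sup>2 + mu_hat\<^sup>2"
  define C3 where "C3 = 4 * sigma_x * sqrt ((CARD('n) + CARD('l)) * ln (9 / delta))
                     + mu_hat * (sqrt (2 * (CARD('l) + CARD('n))) + sqrt (2 * ln (2 / delta)))"
  define K where "K = real t * (specnorm Theta * C1) + sqrt (real t) * (sigma_eta * C3)"
  have aK: "specnorm (a k) \<le> K" for k
  proof -
    have "a k = Theta ** (\<Sum>j=1..t. outer (x k j) (x k j)) + (\<Sum>j=1..t. outer (eta k j) (x k j))"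
      by (simp add: a_def outer_add sum.distrib outer_mv mat_mul_sum)
    hence "specnorm (a k) \<le> specnorm Theta * specnorm (\<Sum>j=1..t. outer (x k j) (x k j))
                              + specnorm (\<Sum>j=1..t. outer (eta k j) (x k j))"
    proof -
      assume ak: "a k = Theta ** (\<Sum>j=1..t. outer (x k j) (x k j)) + (\<Sum>j=1..t. outer (eta k j) (x k j))"
      have "specnorm (a k) \<le> specnorm (Theta ** (\<Sum>j=1..t. outer (x k j) (x k j))) + specnorm (\<Sum>j=1..t. outer (eta k j) (x k j))"
        unfolding ak by (rule specnorm_add)
      also have "specnorm (Theta ** (\<Sum>j=1..t. outer (x k j) (x k j))) \<le> specnorm Theta * specnorm (\<Sum>j=1..t. outer (x k j) (x k j))"
        by (rule specnorm_mult)
      finally show ?thesis by simp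
    qed
    also have "\<dots> \<le> specnorm Theta * (real t * C1) + sqrt (real t) * sigma_eta * C3"
      using E3_1[of k] E3_3[of k] unfolding C1_def C3_def
      by (intro add_mono mult_left_mono specnorm_nonneg) auto
    finally show ?thesis unfolding K_def by (simp add: algebra_simps)
  qed
  have K0: "0 \<le> K" using aK[of undefined] specnorm_nonneg[of "a undefined"] by linarith
  have WC: "0 \<le> rhoW W \<and> (\<forall>v. v \<bullet> (\<chi> i. 1) = 0 \<longrightarrow> norm (W *v v) \<le> rhoW W * norm v)"
    by (rule W_contract[OF m2 W_sym W_stoch W_rho])
  hence rho0: "0 \<le> rhoW W" and contr: "\<And>v. v \<bullet> (\<chi> i. 1) = 0 \<Longrightarrow> norm (W *v v) \<le> rhoW W * norm v"
    by auto
  have m0: "real m > 0" unfolding m_def by simp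
  have m1: "real m \<ge> 1" unfolding m_def using m2 by simp
  have mpow: "real m \<le> real m powr (3/2) * sqrt (real CARD('l))"
  proof -
    have "real m = real m powr 1" using m0 by simp
    also have "\<dots> \<le> real m powr (3/2)" using m1 by (intro powr_mono) auto
    also have "\<dots> \<le> real m powr (3/2) * sqrt (real CARD('l))"
    proof -
      have "1 \<le> sqrt (real CARD('l))" by simp
      hence "real m powr (3/2) * 1 \<le> real m powr (3/2) * sqrt (real CARD('l))"
        by (rule mult_left_mono) simp
      thus ?thesis by simp
    qed
    finally show ?thesis .
  qed
  have main: "specnorm (cons_iter W a T i - (1 / real m) *\<^sub>R (\<Sum>k\<in>UNIV. a k))
      \<le> real m powr (3/2) * sqrt (real CARD('l)) * rhoW W ^ T * K" for i
  proof -
    define one :: "real^'m" where "one = (\<chi> i. 1)"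
    define w where "w = axis i 1 - (1 / real m) *\<^sub>R one"
    have ione: "axis i 1 \<bullet> one = 1" unfolding one_def by (simp add: inner_axis')
    have oneone: "one \<bullet> one = real m" unfolding one_def m_def by (simp add: inner_vec_def)
    have wone: "w \<bullet> one = 0" using m0 unfolding w_def by (simp add: inner_diff_left ione oneone)
    have "w \<bullet> w = w \<bullet> axis i 1 - (1 / real m) * (w \<bullet> one)"
      by (metis w_def inner_diff_right inner_scaleR_right)
    also have "\<dots> = w $ i" using wone by (simp add: inner_axis)
    also have "\<dots> = 1 - 1 / real m" unfolding w_def one_def by simp
    finally have "w \<bullet> w \<le> 1" using m0 by simp
    hence nw: "norm w \<le> 1" by (simp add: norm_eq_sqrt_inner)
    have Wone: "W *v one = one" unfolding one_def by (simp add: vec_eq_iff matrix_vector_mult_def W_stoch)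
    have it: "(wpow W k *v w) \<bullet> one = 0 \<and> norm (wpow W k *v w) \<le> rhoW W ^ k * norm w" for k
    proof (induction k)
      case 0 thus ?case using wone by simp
    next
      case (Suc k)
      define y where "y = wpow W k *v w"
      have e: "wpow W (Suc k) *v w = W *v y" unfolding y_def by (simp add: matrix_vector_mul_assoc)
      have "(W *v y) \<bullet> one = y \<bullet> (W *v one)" by (rule sym_inner[OF W_sym])
      hence o: "(W *v y) \<bullet> one = 0" using Suc Wone unfolding y_def by simp
      have "norm (W *v y) \<le> rhoW W * norm y" using contr Suc unfolding y_def one_def by simp
      also have "\<dots> \<le> rhoW W * (rhoW W ^ k * norm w)" using Suc rho0 unfolding y_def
        by (intro mult_left_mono) auto
      finally show ?case using e o by simp
    qed
    define r where "r = wpow W T *v w"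
    have rj: "r $ j = (wpow W T)$i$j - 1 / real m" for j
    proof -
      have "r = wpow W T *v axis i 1 - (1 / real m) *\<^sub>R (wpow W T *v one)"
        unfolding r_def w_def by (simp add: matrix_vector_mult_diff_distrib matrix_vector_mult_scaleR)
      also have "wpow W T *v one = one" unfolding one_def by (rule wpow_one[OF W_stoch])
      finally have "r $ j = (wpow W T *v axis i 1) $ j - 1 / real m" unfolding one_def by simp
      also have "(wpow W T *v axis i 1) $ j = (wpow W T) $ j $ i"
        by (simp add: matrix_vector_mult_basis column_def)
      also have "\<dots> = (transpose (wpow W T)) $ i $ j" by (simp add: transpose_def)
      also have "\<dots> = (wpow W T) $ i $ j" by (simp add: wpow_sym[OF W_sym])
      finally show ?thesis .
    qed
    have diff: "cons_iter W a T i - (1 / real m) *\<^sub>R (\<Sum>k\<in>UNIV. a k) = (\<Sum>j\<in>UNIV. r $ j *\<^sub>R a j)"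
      by (simp add: cons_iter_wpow rj scaleR_sum_right sum_subtractf scaleR_diff_left)
    have "specnorm (\<Sum>j\<in>UNIV. r $ j *\<^sub>R a j) \<le> (\<Sum>j\<in>UNIV. \<bar>r $ j\<bar>) * K"
      by (rule specnorm_lincomb) (use aK in auto)
    also have "(\<Sum>j\<in>UNIV. \<bar>r $ j\<bar>) \<le> (\<Sum>j\<in>(UNIV::'m set). norm r)"
      by (rule sum_mono) (rule component_le_norm_cart)
    hence "(\<Sum>j\<in>UNIV. \<bar>r $ j\<bar>) \<le> real m * norm r" unfolding m_def by simp
    hence "(\<Sum>j\<in>UNIV. \<bar>r $ j\<bar>) * K \<le> real m * norm r * K" using K0 by (rule mult_right_mono)
    also have "norm r \<le> rhoW W ^ T" 
    proof -
      have "norm r \<le> rhoW W ^ T * norm w" using it[of T] unfolding r_def by simp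
      also have "\<dots> \<le> rhoW W ^ T" using nw rho0 by (simp add: mult_left_le)
      finally show ?thesis .
    qed
    hence "real m * norm r * K \<le> real m * rhoW W ^ T * K" using m0 K0
      by (intro mult_right_mono mult_left_mono) auto
    also have "\<dots> \<le> real m powr (3/2) * sqrt (real CARD('l)) * rhoW W ^ T * K"
      using mpow K0 rho0 by (intro mult_right_mono) auto
    finally show ?thesis unfolding diff .
  qed
  show ?thesis using main unfolding a_def K_def C1_def C3_def m_def by simp
qed

end
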